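(* Let $A$ be a sequence algebra, $P\ne0$ a homogeneous normed $A$-module of finite type with each $P_n$ identified isometrically with $l_1^0(\Lambda_n)$, with natural basis $\{e^n_\nu:\nu\in\Lambda_n\}$. Let $S$ be the unit sphere of $P$ and $E(S)$ the set of $z\in S$ such that for every $n$, $z_n$ is a scalar multiple of $e^n_\nu$ for some $\nu\in\Lambda_n$. Then for every normed $A$-module $X$ and every bounded morphism $\varphi:P\to X$, $\|\varphi\|=\sup\{\|\varphi(z)\|:z\in E(S)\}$.
   Context: Modules are contractive ($\|a\cdot x\|\le\|a\|\|x\|$); morphisms are bounded $A$-module maps. $l_1^0(\Lambda)$: finitely supported functions on $\Lambda$ with the $l_1$-norm; its natural basis consists of indicator functions of points. A sequence algebra is a normed algebra of complex sequences with coordinatewise operations containing $c_{00}$ as a dense subalgebra, with $\|\mathbf p^n\|=1$, where $\mathbf p^n$ has $1$ in place $n$ and $0$ elsewhere. $x_n:=\mathbf p^n\cdot x$, $P_n:=\{\mathbf p^n\cdot x\}$. Homogeneous: $\|x_n\|\le\|y_n\|$ for all $n$ implies $\|x\|\le\|y\|$. Finite type: for each $x$, $x_n=0$ for large $n$. *)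

theory Defs
  imports "HOL-Analysis.Analysis"
begin

type_synonym cseq = "nat \<Rightarrow> complex"

definition pe :: "nat \<Rightarrow> cseq" where
  "pe n = (\<lambda>k. if k = n then 1 else 0)"

definition c00 :: "cseq set" where
  "c00 = {a. finite {k. a k \<noteq> 0}}"

definition seq_algebra :: "cseq set \<Rightarrow> (cseq \<Rightarrow> real) \<Rightarrow> bool" where
  "seq_algebra SA nA \<longleftrightarrow>
     (\<forall>a\<in>SA. \<forall>b\<in>SA. (\<lambda>k. a k + b k) \<in> SA \<and> (\<lambda>k. a k * b k) \<in> SA) \<and>
     (\<forall>c. \<forall>a\<in>SA. (\<lambda>k. c * a k) \<in> SA) \<and>
     c00 \<subseteq> SA \<and>
     (\<forall>a\<in>SA. 0 \<le> nA a \<and> (nA a = 0 \<longleftrightarrow> a = (\<lambda>k. 0))) \<and>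
     (\<forall>a\<in>SA. \<forall>b\<in>SA. nA (\<lambda>k. a k + b k) \<le> nA a + nA b) \<and>
     (\<forall>c. \<forall>a\<in>SA. nA (\<lambda>k. c * a k) = cmod c * nA a) \<and>
     (\<forall>a\<in>SA. \<forall>b\<in>SA. nA (\<lambda>k. a k * b k) \<le> nA a * nA b) \<and>
     (\<forall>a\<in>SA. \<forall>e>0. \<exists>b\<in>c00. nA (\<lambda>k. a k - b k) < e) \<and>
     (\<forall>n. nA (pe n) = 1)"

definition complex_scaling :: "(complex \<Rightarrow> 'p::real_normed_vector \<Rightarrow> 'p) \<Rightarrow> bool" where
  "complex_scaling sm \<longleftrightarrow>
     (\<forall>r x. sm (complex_of_real r) x = r *\<^sub>R x) \<and>
     (\<forall>c d x. sm (c * d) x = sm c (sm d x)) \<and>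
     (\<forall>c d x. sm (c + d) x = sm c x + sm d x) \<and>
     (\<forall>c x y. sm c (x + y) = sm c x + sm c y) \<and>
     (\<forall>c x. norm (sm c x) = cmod c * norm x)"

definition normed_module ::
  "cseq set \<Rightarrow> (cseq \<Rightarrow> real) \<Rightarrow> (complex \<Rightarrow> 'p::real_normed_vector \<Rightarrow> 'p) \<Rightarrow>
   (cseq \<Rightarrow> 'p \<Rightarrow> 'p) \<Rightarrow> bool" where
  "normed_module SA nA sm act \<longleftrightarrow> complex_scaling sm \<and>
     (\<forall>a\<in>SA. \<forall>x y. act a (x + y) = act a x + act a y) \<and>
     (\<forall>a\<in>SA. \<forall>b\<in>SA. \<forall>x. act (\<lambda>k. a k + b k) x = act a x + act b x) \<and>
     (\<forall>a\<in>SA. \<forall>c x. act (\<lambda>k. c * a k) x = sm c (act a x)) \<and>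
     (\<forall>a\<in>SA. \<forall>c x. act a (sm c x) = sm c (act a x)) \<and>
     (\<forall>a\<in>SA. \<forall>b\<in>SA. \<forall>x. act (\<lambda>k. a k * b k) x = act a (act b x)) \<and>
     (\<forall>a\<in>SA. \<forall>x. norm (act a x) \<le> nA a * norm x)"

definition module_morphism ::
  "cseq set \<Rightarrow> (complex \<Rightarrow> 'p::real_normed_vector \<Rightarrow> 'p) \<Rightarrow> (cseq \<Rightarrow> 'p \<Rightarrow> 'p) \<Rightarrow>
   (complex \<Rightarrow> 'x::real_normed_vector \<Rightarrow> 'x) \<Rightarrow> (cseq \<Rightarrow> 'x \<Rightarrow> 'x) \<Rightarrow> ('p \<Rightarrow> 'x) \<Rightarrow> bool" where
  "module_morphism SA smP actP smX actX f \<longleftrightarrow>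
     bounded_linear f \<and> (\<forall>c x. f (smP c x) = smX c (f x)) \<and>
     (\<forall>a\<in>SA. \<forall>x. f (actP a x) = actX a (f x))"

definition homogeneous :: "(cseq \<Rightarrow> 'p::real_normed_vector \<Rightarrow> 'p) \<Rightarrow> bool" where
  "homogeneous act \<longleftrightarrow>
     (\<forall>x y. (\<forall>n. norm (act (pe n) x) \<le> norm (act (pe n) y)) \<longrightarrow> norm x \<le> norm y)"

definition finite_type :: "(cseq \<Rightarrow> 'p::real_normed_vector \<Rightarrow> 'p) \<Rightarrow> bool" where
  "finite_type act \<longleftrightarrow> (\<forall>x. \<exists>N. \<forall>n\<ge>N. act (pe n) x = 0)"

definition l10 :: "'l set \<Rightarrow> ('l \<Rightarrow> complex) set" where
  "l10 L = {f. finite {v. f v \<noteq> 0} \<and> (\<forall>v. v \<notin> L \<longrightarrow> f v = 0)}"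

definition l1norm :: "('l \<Rightarrow> complex) \<Rightarrow> real" where
  "l1norm f = (\<Sum>v\<in>{v. f v \<noteq> 0}. cmod (f v))"

definition delta :: "'l \<Rightarrow> 'l \<Rightarrow> complex" where
  "delta v = (\<lambda>w. if w = v then 1 else 0)"

definition l1_iso :: "(complex \<Rightarrow> 'p::real_normed_vector \<Rightarrow> 'p) \<Rightarrow> (cseq \<Rightarrow> 'p \<Rightarrow> 'p) \<Rightarrow> nat \<Rightarrow> 'l set \<Rightarrow>
    (('l \<Rightarrow> complex) \<Rightarrow> 'p) \<Rightarrow> bool" where
  "l1_iso sm act n L J \<longleftrightarrow>
     bij_betw J (l10 L) (range (act (pe n))) \<and>
     (\<forall>f\<in>l10 L. \<forall>g\<in>l10 L. J (\<lambda>v. f v + g v) = J f + J g) \<and>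
     (\<forall>f\<in>l10 L. \<forall>c. J (\<lambda>v. c * f v) = sm c (J f)) \<and>
     (\<forall>f\<in>l10 L. norm (J f) = l1norm f)"

end

theory Submission
  imports Defs
begin

lemma l10_add: "f \<in> l10 L \<Longrightarrow> g \<in> l10 L \<Longrightarrow> (\<lambda>v. f v + g v) \<in> l10 L"
proof -
  assume a: "f \<in> l10 L" "g \<in> l10 L"
  have "{v. f v + g v \<noteq> 0} \<subseteq> {v. f v \<noteq> 0} \<union> {v. g v \<noteq> 0}" by auto
  moreover have "finite ({v. f v \<noteq> 0} \<union> {v. g v \<noteq> 0})" using a by (simp add: l10_def)
  ultimately show ?thesis using a by (auto simp: l10_def intro: finite_subset)
qed

lemma l10_zero: "(\<lambda>v. 0) \<in> l10 L" by (simp add: l10_def)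

lemma l10_scale: "f \<in> l10 L \<Longrightarrow> (\<lambda>v. c * f v) \<in> l10 L"
proof -
  assume a: "f \<in> l10 L"
  have "{v. c * f v \<noteq> 0} \<subseteq> {v. f v \<noteq> 0}" by auto
  then show ?thesis using a by (auto simp: l10_def intro: finite_subset)
qed

lemma l10_sum: "finite F \<Longrightarrow> (\<forall>i\<in>F. g i \<in> l10 L) \<Longrightarrow> (\<lambda>v. \<Sum>i\<in>F. g i v) \<in> l10 L"
proof (induction F rule: finite_induct)
  case empty then show ?case using l10_zero by simp
next
  case (insert a F)
  then show ?case using l10_add[of "g a" L "\<lambda>v. \<Sum>i\<in>F. g i v"] by simp
qed

lemma J_sum:
  fixes J :: "('l \<Rightarrow> complex) \<Rightarrow> 'p::real_normed_vector"
  assumes add: "\<forall>f\<in>l10 L. \<forall>g\<in>l10 L. J (\<lambda>v. f v + g v) = J f + J g"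
    and z: "J (\<lambda>v. 0) = 0"
  shows "finite F \<Longrightarrow> (\<forall>i\<in>F. g i \<in> l10 L) \<Longrightarrow> J (\<lambda>v. \<Sum>i\<in>F. g i v) = (\<Sum>i\<in>F. J (g i))"
proof (induction F rule: finite_induct)
  case empty then show ?case using z by simp
next
  case (insert a F)
  have "J (\<lambda>v. \<Sum>i\<in>insert a F. g i v) = J (\<lambda>v. g a v + (\<Sum>i\<in>F. g i v))"
    using insert by simp
  also have "\<dots> = J (g a) + J (\<lambda>v. \<Sum>i\<in>F. g i v)"
    using add insert l10_sum[of F g L] by simp
  finally show ?case using insert by simp
qed

theorem mainTheorem19:
  fixes SA :: "cseq set" and nA :: "cseq \<Rightarrow> real"
    and actP :: "cseq \<Rightarrow> 'p::real_normed_vector \<Rightarrow> 'p"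
    and \<Lambda> :: "nat \<Rightarrow> 'l set"
    and J :: "nat \<Rightarrow> ('l \<Rightarrow> complex) \<Rightarrow> 'p"
    and smP :: "complex \<Rightarrow> 'p \<Rightarrow> 'p" and smX :: "complex \<Rightarrow> 'x::real_normed_vector \<Rightarrow> 'x"
    and actX :: "cseq \<Rightarrow> 'x \<Rightarrow> 'x"
    and \<phi> :: "'p \<Rightarrow> 'x"
  assumes "seq_algebra SA nA"
    and "normed_module SA nA smP actP"
    and "\<exists>x::'p. x \<noteq> 0"
    and "homogeneous actP"
    and "finite_type actP"
    and "\<forall>n. l1_iso smP actP n (\<Lambda> n) (J n)"
    and "normed_module SA nA smX actX"
    and "module_morphism SA smP actP smX actX \<phi>"
  shows "onorm \<phi> = Sup ((\<lambda>z. norm (\<phi> z)) `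
           {z. norm z = 1 \<and>
               (\<forall>n. actP (pe n) z = 0 \<or>
                    (\<exists>v\<in>\<Lambda> n. \<exists>c. actP (pe n) z = smP c (J n (delta v))))})"
proof -
  from assms(1) have c00SA: "c00 \<subseteq> SA" by (simp add: seq_algebra_def)
  from assms(2) have cs: "complex_scaling smP"
    and addP: "\<forall>a\<in>SA. \<forall>x y. actP a (x+y) = actP a x + actP a y"
    and multP: "\<forall>a\<in>SA. \<forall>b\<in>SA. \<forall>x. actP (\<lambda>k. a k * b k) x = actP a (actP b x)"
    and smcP: "\<forall>a\<in>SA. \<forall>c x. actP a (smP c x) = smP c (actP a x)"
    and scP: "\<forall>a\<in>SA. \<forall>c x. actP (\<lambda>k. c * a k) x = smP c (actP a x)"
    unfolding normed_module_def by auto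
  from cs have smR: "\<And>r x. smP (complex_of_real r) x = r *\<^sub>R x"
    and smM: "\<And>c d x. smP (c*d) x = smP c (smP d x)"
    and smN: "\<And>c x. norm (smP c x) = cmod c * norm x"
    unfolding complex_scaling_def by auto
  have sm0: "\<And>x. smP 0 x = 0" using smN[of 0] by simp
  have smz: "\<And>c. smP c 0 = 0" using smN by (metis mult_zero_right norm_eq_zero norm_zero)
  have sm1: "\<And>x. smP 1 x = x" using smR[of 1] by simp
  have peSA: "\<And>n. pe n \<in> SA"
  proof -
    fix n
    have "{k. pe n k \<noteq> 0} = {n}" by (auto simp: pe_def)
    then have "pe n \<in> c00" by (simp add: c00_def)
    with c00SA show "pe n \<in> SA" by auto
  qed
  define A where "A n = actP (pe n)" for n
  have Aadd: "\<And>n x y. A n (x+y) = A n x + A n y" using addP peSA by (simp add: A_def)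
  have Aadditive: "\<And>n. Modules.additive (A n)" by (simp add: Modules.additive_def Aadd)
  have Adiff: "\<And>n x y. A n (x - y) = A n x - A n y" using Aadditive Modules.additive.diff by blast
  have A0: "\<And>n. A n 0 = 0" using Aadditive Modules.additive.zero by blast
  have Asm: "\<And>n c x. A n (smP c x) = smP c (A n x)" using smcP peSA by (simp add: A_def)
  have Ascale: "\<And>n r x. A n (r *\<^sub>R x) = r *\<^sub>R (A n x)"
  proof -
    fix n r x
    have "A n (smP (complex_of_real r) x) = smP (complex_of_real r) (A n x)" by (rule Asm)
    then show "A n (r *\<^sub>R x) = r *\<^sub>R (A n x)" by (simp only: smR)
  qed
  have AA: "\<And>m k u. A m (A k u) = (if m = k then A k u else 0)"
  proof -
    fix m k u
    have e: "A m (A k u) = actP (\<lambda>j. pe m j * pe k j) u" using multP peSA by (simp add: A_def)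
    show "A m (A k u) = (if m = k then A k u else 0)"
    proof (cases "m = k")
      case True
      have "(\<lambda>j. pe m j * pe k j) = pe k" using True by (auto simp: pe_def)
      then show ?thesis using e True by (simp add: A_def)
    next
      case False
      have "(\<lambda>j. pe m j * pe k j) = (\<lambda>j. 0 * pe k j)" using False by (auto simp: pe_def)
      moreover have "actP (\<lambda>j. 0 * pe k j) u = smP 0 (A k u)" unfolding A_def using scP peSA[of k] by blast
      ultimately have "A m (A k u) = smP 0 (A k u)" using e by simp
      then show ?thesis using False sm0 by simp
    qed
  qed
  have homog: "\<And>x y. (\<And>n. norm (A n x) = norm (A n y)) \<Longrightarrow> norm x = norm y"
  proof -
    fix x y :: 'p
    assume h: "\<And>n. norm (A n x) = norm (A n y)"
    from assms(4) have H: "\<And>x y. (\<forall>n. norm (A n x) \<le> norm (A n y)) \<Longrightarrow> norm x \<le> norm y"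
      unfolding homogeneous_def A_def by blast
    show "norm x = norm y" using H[of x y] H[of y x] h by (simp add: antisym)
  qed
  from assms(6) have Jbij: "\<And>n. bij_betw (J n) (l10 (\<Lambda> n)) (range (A n))"
    and Jadd: "\<And>n. \<forall>f\<in>l10 (\<Lambda> n). \<forall>g\<in>l10 (\<Lambda> n). J n (\<lambda>v. f v + g v) = J n f + J n g"
    and Jsc: "\<And>n. \<forall>f\<in>l10 (\<Lambda> n). \<forall>c. J n (\<lambda>v. c * f v) = smP c (J n f)"
    and Jnorm: "\<And>n. \<forall>f\<in>l10 (\<Lambda> n). norm (J n f) = l1norm f"
    unfolding l1_iso_def A_def by auto
  have J0: "\<And>n. J n (\<lambda>v. 0) = 0"
  proof -
    fix n
    have "J n (\<lambda>v. 0 * 0) = smP 0 (J n (\<lambda>v. 0))"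
      using Jsc[of n, rule_format, OF l10_zero, of 0] by simp
    then show "J n (\<lambda>v. 0) = 0" using sm0 by simp
  qed
  have deltal10: "\<And>n v. v \<in> \<Lambda> n \<Longrightarrow> delta v \<in> l10 (\<Lambda> n)"
  proof -
    fix n v assume "v \<in> \<Lambda> n"
    moreover have "{w. delta v w \<noteq> 0} = {v}" by (auto simp: delta_def)
    ultimately show "delta v \<in> l10 (\<Lambda> n)" by (auto simp: l10_def delta_def)
  qed
  have deltanorm: "\<And>v::'l. l1norm (delta v) = 1"
  proof -
    fix v :: 'l
    have "{w. delta v w \<noteq> 0} = {v}" by (auto simp: delta_def)
    then show "l1norm (delta v) = 1" by (simp add: l1norm_def delta_def)
  qed
  have Jdnorm: "\<And>n v. v \<in> \<Lambda> n \<Longrightarrow> norm (J n (delta v)) = 1"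
    using Jnorm deltal10 deltanorm by simp
  have Jdrange: "\<And>n v. v \<in> \<Lambda> n \<Longrightarrow> \<exists>u. J n (delta v) = A n u"
  proof -
    fix n v assume "v \<in> \<Lambda> n"
    then have "J n (delta v) \<in> range (A n)" using bij_betwE[OF Jbij[of n]] deltal10 by blast
    then show "\<exists>u. J n (delta v) = A n u" by auto
  qed
  have Jsurj: "\<And>n x. \<exists>f\<in>l10 (\<Lambda> n). J n f = A n x"
  proof -
    fix n x
    have "A n x \<in> J n ` l10 (\<Lambda> n)" using Jbij[of n] by (simp add: bij_betw_def)
    then show "\<exists>f\<in>l10 (\<Lambda> n). J n f = A n x" by auto
  qed
  have Aw: "\<And>m k v c. v \<in> \<Lambda> k \<Longrightarrow> A m (smP c (J k (delta v))) = (if m = k then smP c (J k (delta v)) else 0)"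
  proof -
    fix m k v c assume "v \<in> \<Lambda> k"
    then obtain u where u: "J k (delta v) = A k u" using Jdrange by blast
    show "A m (smP c (J k (delta v))) = (if m = k then smP c (J k (delta v)) else 0)"
      using Asm AA u smz by simp
  qed
  from assms(8) have blin: "bounded_linear \<phi>" by (simp add: module_morphism_def)
  then interpret phi: bounded_linear \<phi> .
  define atom where "atom n z \<longleftrightarrow> A n z = 0 \<or> (\<exists>v\<in>\<Lambda> n. \<exists>c. A n z = smP c (J n (delta v)))" for n z
  define E where "E = {z. norm z = 1 \<and>
               (\<forall>n. actP (pe n) z = 0 \<or>
                    (\<exists>v\<in>\<Lambda> n. \<exists>c. actP (pe n) z = smP c (J n (delta v))))}"
  have Eeq: "E = {z. norm z = 1 \<and> (\<forall>n. atom n z)}" unfolding E_def atom_def A_def by simp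
  define M where "M = Sup ((\<lambda>z. norm (\<phi> z)) ` E)"
  have bdd: "bdd_above ((\<lambda>z. norm (\<phi> z)) ` E)"
  proof (rule bdd_aboveI)
    fix y assume "y \<in> (\<lambda>z. norm (\<phi> z)) ` E"
    then obtain z where "z \<in> E" "y = norm (\<phi> z)" by auto
    then show "y \<le> onorm \<phi>" using onorm[OF blin, of z] by (simp add: E_def)
  qed
  have Ene: "E \<noteq> {}"
  proof -
    obtain x :: 'p where x: "x \<noteq> 0" using assms(3) by blast
    have "\<exists>n. A n x \<noteq> 0"
    proof (rule ccontr)
      assume "\<not> ?thesis"
      then have "\<And>n. norm (A n x) = norm (A n 0)" using A0 by simp
      then have "norm x = norm (0::'p)" using homog by blast
      then show False using x by simp
    qed
    then obtain n where n: "A n x \<noteq> 0" by blast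
    obtain f where f: "f \<in> l10 (\<Lambda> n)" "J n f = A n x" using Jsurj by blast
    have "f \<noteq> (\<lambda>v. 0)" using f n J0 by auto
    then obtain v where v: "f v \<noteq> 0" by auto
    then have vL: "v \<in> \<Lambda> n" using f by (auto simp: l10_def)
    define z where "z = J n (delta v)"
    have "norm z = 1" using Jdnorm vL z_def by simp
    moreover have "\<forall>m. atom m z"
    proof
      fix m
      have "A m z = (if m = n then smP 1 (J n (delta v)) else 0)"
        using Aw[OF vL, of m 1] sm1 z_def by simp
      then show "atom m z" unfolding atom_def using vL by auto
    qed
    ultimately have "z \<in> E" using Eeq by simp
    then show ?thesis by auto
  qed
  have Mupper: "\<And>z. z \<in> E \<Longrightarrow> norm (\<phi> z) \<le> M"
    unfolding M_def using bdd by (intro cSup_upper) auto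
  have M0: "0 \<le> M" using Ene Mupper norm_ge_zero order_trans by blast
  have claim: "\<And>x. (\<forall>n\<ge>k. atom n x) \<Longrightarrow> norm (\<phi> x) \<le> M * norm x" for k
  proof (induction k)
    case 0
    fix x assume h: "\<forall>n\<ge>0. atom n x"
    show "norm (\<phi> x) \<le> M * norm x"
    proof (cases "x = 0")
      case True then show ?thesis by simp
    next
      case False
      define z where "z = (1 / norm x) *\<^sub>R x"
      have nz: "norm z = 1" using False by (simp add: z_def)
      have "\<forall>n. atom n z"
      proof
        fix n
        have "atom n x" using h by simp
        then show "atom n z"
        proof (unfold atom_def, elim disjE bexE exE)
          assume "A n x = 0" then show "A n z = 0 \<or> (\<exists>v\<in>\<Lambda> n. \<exists>c. A n z = smP c (J n (delta v)))"
            by (simp add: z_def Ascale)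
        next
          fix v c assume v: "v \<in> \<Lambda> n" and c: "A n x = smP c (J n (delta v))"
          have "A n z = smP (complex_of_real (1 / norm x) * c) (J n (delta v))"
            unfolding z_def Ascale c smM smR by simp
          then show "A n z = 0 \<or> (\<exists>v\<in>\<Lambda> n. \<exists>c. A n z = smP c (J n (delta v)))" using v by blast
        qed
      qed
      then have "z \<in> E" using nz Eeq by simp
      then have "norm (\<phi> z) \<le> M" by (rule Mupper)
      moreover have e: "norm x *\<^sub>R z = x" using False by (simp add: z_def)
      have "\<phi> (norm x *\<^sub>R z) = norm x *\<^sub>R \<phi> z" by (rule phi.scale)
      then have "\<phi> x = norm x *\<^sub>R \<phi> z" by (simp only: e)
      ultimately show ?thesis by (simp add: mult.commute[of M] mult_left_mono)
    qed
  next
    case (Suc k)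
    fix x assume h: "\<forall>n\<ge>Suc k. atom n x"
    obtain f where f: "f \<in> l10 (\<Lambda> k)" "J k f = A k x" using Jsurj by blast
    define F where "F = {v. f v \<noteq> 0}"
    have finF: "finite F" using f by (simp add: F_def l10_def)
    have FL: "\<And>v. v \<in> F \<Longrightarrow> v \<in> \<Lambda> k" using f by (auto simp: F_def l10_def)
    show "norm (\<phi> x) \<le> M * norm x"
    proof (cases "F = {}")
      case True
      then have "f = (\<lambda>v. 0)" by (auto simp: F_def)
      then have "A k x = 0" using f J0 by simp
      have "\<forall>n\<ge>k. atom n x"
      proof (intro allI impI)
        fix n assume "k \<le> n"
        then have "n = k \<or> n \<ge> Suc k" by auto
        then show "atom n x" using h \<open>A k x = 0\<close> by (auto simp: atom_def)
      qed
      then show ?thesis using Suc.IH by blast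
    next
      case False
      define s where "s = l1norm f"
      have s_def': "s = (\<Sum>v\<in>F. cmod (f v))" by (simp add: s_def l1norm_def F_def)
      have spos: "s > 0" unfolding s_def' using False finF
        by (intro sum_pos) (auto simp: F_def)
      have nAk: "norm (A k x) = s" using f(1) Jnorm[of k] s_def f(2)[symmetric] by simp
      define c where "c v = complex_of_real s * f v / complex_of_real (cmod (f v))" for v
      define w where "w v = smP (c v) (J k (delta v))" for v
      define y where "y v = x - A k x + w v" for v
      define t where "t v = cmod (f v) / s" for v
      have cmodc: "\<And>v. v \<in> F \<Longrightarrow> cmod (c v) = s"
        using spos by (auto simp: c_def F_def norm_divide norm_mult)
      have nw: "\<And>v. v \<in> F \<Longrightarrow> norm (w v) = s"
        using cmodc Jdnorm FL smN by (simp add: w_def)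
      have Ay: "\<And>v m. v \<in> F \<Longrightarrow> A m (y v) = (if m = k then w v else A m x)"
        using Aw FL AA Adiff Aadd by (simp add: y_def w_def)
      have ny: "\<And>v. v \<in> F \<Longrightarrow> norm (y v) = norm x"
        by (rule homog) (simp add: Ay nw nAk)
      have aty: "\<And>v. v \<in> F \<Longrightarrow> \<forall>n\<ge>k. atom n (y v)"
      proof (intro allI impI)
        fix v n assume v: "v \<in> F" and n: "k \<le> n"
        show "atom n (y v)"
        proof (cases "n = k")
          case True
          then show ?thesis using Ay[OF v] FL[OF v] by (auto simp: atom_def w_def)
        next
          case False
          then have "atom n x" using h n by simp
          then show ?thesis using Ay[OF v] False by (simp add: atom_def)
        qed
      qed
      have IHy: "\<And>v. v \<in> F \<Longrightarrow> norm (\<phi> (y v)) \<le> M * norm x"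
        using Suc.IH[OF aty] ny by simp
      have sumt: "(\<Sum>v\<in>F. t v) = 1" using spos s_def' by (simp add: t_def sum_divide_distrib[symmetric])
      have tw: "\<And>v. v \<in> F \<Longrightarrow> t v *\<^sub>R w v = J k (\<lambda>u. f v * delta v u)"
      proof -
        fix v assume v: "v \<in> F"
        have fv: "cmod (f v) \<noteq> 0" using v by (simp add: F_def)
        have "complex_of_real (t v) * c v = f v"
          using spos fv by (simp add: t_def c_def field_simps)
        have "t v *\<^sub>R w v = smP (complex_of_real (t v)) (w v)" by (simp only: smR)
        also have "\<dots> = smP (complex_of_real (t v) * c v) (J k (delta v))" by (simp only: smM w_def)
        finally have "t v *\<^sub>R w v = smP (f v) (J k (delta v))"
          using \<open>complex_of_real (t v) * c v = f v\<close> by simp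
        then show "t v *\<^sub>R w v = J k (\<lambda>u. f v * delta v u)"
          using Jsc deltal10 FL v by simp
      qed
      have fsum: "(\<lambda>u. \<Sum>v\<in>F. f v * delta v u) = f"
      proof
        fix u
        show "(\<Sum>v\<in>F. f v * delta v u) = f u"
        proof (cases "u \<in> F")
          case True
          then have "(\<Sum>v\<in>F. f v * delta v u) = (\<Sum>v\<in>{u}. f v * delta v u)"
            using finF by (intro sum.mono_neutral_right) (auto simp: delta_def)
          then show ?thesis by (simp add: delta_def)
        next
          case False
          then show ?thesis by (auto simp: delta_def F_def intro!: sum.neutral)
        qed
      qed
      have sw: "(\<Sum>v\<in>F. t v *\<^sub>R w v) = A k x"
      proof -
        have "(\<Sum>v\<in>F. t v *\<^sub>R w v) = (\<Sum>v\<in>F. J k (\<lambda>u. f v * delta v u))"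
          using tw by simp
        also have "\<dots> = J k (\<lambda>u. \<Sum>v\<in>F. f v * delta v u)"
        proof -
          have "\<forall>i\<in>F. (\<lambda>u. f i * delta i u) \<in> l10 (\<Lambda> k)"
            using l10_scale deltal10 FL by blast
          then show ?thesis
            using J_sum[OF Jadd[of k] J0[of k] finF, of "\<lambda>v u. f v * delta v u"] by simp
        qed
        finally show ?thesis using fsum f by simp
      qed
      have xdec: "x = (\<Sum>v\<in>F. t v *\<^sub>R y v)"
      proof -
        have "(\<Sum>v\<in>F. t v *\<^sub>R y v) = (\<Sum>v\<in>F. t v *\<^sub>R (x - A k x)) + (\<Sum>v\<in>F. t v *\<^sub>R w v)"
          by (simp add: y_def scaleR_right_distrib sum.distrib)
        also have "\<dots> = (\<Sum>v\<in>F. t v) *\<^sub>R (x - A k x) + A k x"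
          by (simp add: sw scaleR_sum_left)
        finally show ?thesis using sumt by simp
      qed
      have "\<phi> x = (\<Sum>v\<in>F. t v *\<^sub>R \<phi> (y v))"
        by (subst xdec) (simp add: phi.sum phi.scale)
      then have "norm (\<phi> x) \<le> (\<Sum>v\<in>F. norm (t v *\<^sub>R \<phi> (y v)))"
        using norm_sum[of "\<lambda>v. t v *\<^sub>R \<phi> (y v)" F] by (simp only:)
      also have "\<dots> \<le> (\<Sum>v\<in>F. t v * (M * norm x))"
      proof (rule sum_mono)
        fix v assume v: "v \<in> F"
        have "t v \<ge> 0" using spos by (simp add: t_def)
        then show "norm (t v *\<^sub>R \<phi> (y v)) \<le> t v * (M * norm x)"
          using IHy[OF v] by (simp add: mult_left_mono)
      qed
      also have "\<dots> = M * norm x" using sumt by (simp add: sum_distrib_right[symmetric])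
      finally show ?thesis .
    qed
  qed
  have all: "\<And>x. norm (\<phi> x) \<le> M * norm x"
  proof -
    fix x
    obtain N where "\<forall>n\<ge>N. actP (pe n) x = 0" using assms(5) by (auto simp: finite_type_def)
    then have "\<forall>n\<ge>N. atom n x" by (simp add: atom_def A_def)
    then show "norm (\<phi> x) \<le> M * norm x" by (rule claim)
  qed
  have le1: "onorm \<phi> \<le> M" using onorm_bound[OF M0 all] .
  have le2: "M \<le> onorm \<phi>" unfolding M_def using Ene
    by (intro cSup_least) (auto simp: E_def intro: order_trans[OF onorm[OF blin]])
  show ?thesis using le1 le2 by (simp add: M_def E_def)
qed

end
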